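(* Let $\mathcal{G}$ be a locally finite Borel graph on a standard probability space $(X,\mu)$. Let $M$ be a positive integer, let $r\in(0,1)$, and let $(A_n)_{n\in\mathbb{N}}$ be a sequence of pairwise disjoint Borel subsets of $X$. For each $n\in\mathbb{N}$ define $B_n=\bigcup_{k\le n}A_k$ and $\mathcal{G}_n=\mathcal{G}\restriction(X\setminus B_{n-1})$, where $B_{-1}=\emptyset$. Assume that for each $n\in\mathbb{N}$: (1) $\mu(X\setminus B_n)\le r\,\mu(X\setminus B_{n-1})$, and (2) $\deg_{\mathcal{G}_n}(x)\le M$ for all $x\in A_n$. Then $\chi_\mu^{\mathrm{ap}}(\mathcal{G})\le M+1$.
   Context: A Borel graph on $X$ is a simple undirected graph with Borel edge set; locally finite means every vertex has finite degree. $\mathcal{G}\restriction Y$ is the induced subgraph on $Y$. $\chi_\mu^{\mathrm{ap}}(\mathcal{G})$ is the least $k$ such that for every $\varepsilon>0$ there is a Borel $A\subseteq X$ with $\mu(A)>1-\varepsilon$ such that $\mathcal{G}\restriction A$ admits a $\mu$-measurable proper $k$-coloring. *)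

theory Defs
  imports "HOL-Probability.Probability"
begin

definition standard_prob_space :: "'a::polish_space measure \<Rightarrow> bool" where
  "standard_prob_space \<mu> \<longleftrightarrow> sets \<mu> = sets borel \<and> prob_space \<mu>"

definition borel_graph :: "'a::polish_space measure \<Rightarrow> ('a \<Rightarrow> 'a \<Rightarrow> bool) \<Rightarrow> bool" where
  "borel_graph \<mu> G \<longleftrightarrow> (\<forall>x y. G x y \<longrightarrow> G y x) \<and> (\<forall>x. \<not> G x x)
     \<and> {p. G (fst p) (snd p)} \<in> sets (borel :: ('a \<times> 'a) measure)"

definition locally_finite_graph :: "('a \<Rightarrow> 'a \<Rightarrow> bool) \<Rightarrow> bool" where
  "locally_finite_graph G \<longleftrightarrow> (\<forall>x. finite {y. G x y})"

definition induced_degree :: "('a \<Rightarrow> 'a \<Rightarrow> bool) \<Rightarrow> 'a set \<Rightarrow> 'a \<Rightarrow> nat" where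
  "induced_degree G Y x = card {y \<in> Y. G x y}"

definition measurable_proper_coloring_on ::
  "'a measure \<Rightarrow> ('a \<Rightarrow> 'a \<Rightarrow> bool) \<Rightarrow> 'a set \<Rightarrow> nat \<Rightarrow> bool" where
  "measurable_proper_coloring_on \<mu> G A k \<longleftrightarrow>
     (\<exists>c :: 'a \<Rightarrow> nat. c \<in> measurable (completion \<mu>) (count_space UNIV)
        \<and> (\<forall>x\<in>A. c x < k) \<and> (\<forall>x\<in>A. \<forall>y\<in>A. G x y \<longrightarrow> c x \<noteq> c y))"

definition approx_colorable :: "'a measure \<Rightarrow> ('a \<Rightarrow> 'a \<Rightarrow> bool) \<Rightarrow> nat \<Rightarrow> bool" where
  "approx_colorable \<mu> G k \<longleftrightarrow>
     (\<forall>\<epsilon>>0. \<exists>A\<in>sets \<mu>. measure \<mu> A > 1 - \<epsilon> \<and> measurable_proper_coloring_on \<mu> G A k)"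

text \<open>Approximate measurable chromatic number (infinity if no k works).\<close>
definition chi_ap :: "'a measure \<Rightarrow> ('a \<Rightarrow> 'a \<Rightarrow> bool) \<Rightarrow> enat" where
  "chi_ap \<mu> G = Inf {enat k | k. approx_colorable \<mu> G k}"

end

theory Submission
  imports Defs
begin

section \<open>Baire space topology\<close>

lemma open_coord: "open {\<alpha>::nat\<Rightarrow>nat. \<alpha> n \<in> S}"
proof -
  have eq: "{\<alpha>::nat\<Rightarrow>nat. \<alpha> n \<in> S} = (\<lambda>\<alpha>. \<alpha> n) -` S" by auto
  have "open ((\<lambda>\<alpha>::nat\<Rightarrow>nat. \<alpha> n) -` S)"
    by (rule open_vimage[OF discrete_topology_class.open_discrete continuous_on_product_coordinates])
  then show ?thesis unfolding eq .
qed

lemma closed_coord2: "closed {\<alpha>::nat\<Rightarrow>nat. P (\<alpha> n) (\<alpha> m)}"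
proof -
  have eq: "{\<alpha>::nat\<Rightarrow>nat. P (\<alpha> n) (\<alpha> m)} =
     (\<Inter>p\<in>{p. \<not> P (fst p) (snd p)}. - ({\<alpha>. \<alpha> n \<in> {fst p}} \<inter> {\<alpha>. \<alpha> m \<in> {snd p}}))"
    by auto
  have "closed (\<Inter>p\<in>{p. \<not> P (fst p) (snd p)}. - ({\<alpha>::nat\<Rightarrow>nat. \<alpha> n \<in> {fst p}} \<inter> {\<alpha>. \<alpha> m \<in> {snd p}}))"
    by (intro closed_INT ballI closed_Compl open_Int open_coord)
  then show ?thesis unfolding eq .
qed

lemma tendsto_baire:
  fixes s :: "'i \<Rightarrow> nat \<Rightarrow> nat"
  assumes "\<And>i. eventually (\<lambda>k. s k i = \<alpha> i) F"
  shows "(s \<longlongrightarrow> \<alpha>) F"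
proof (rule topological_tendstoI)
  fix U assume U: "open U" "\<alpha> \<in> U"
  then have "openin (product_topology (\<lambda>i. euclidean) UNIV) U"
    by (simp add: euclidean_product_topology)
  from product_topology_open_contains_basis[OF this U(2)] obtain X where
    X: "\<alpha> \<in> Pi\<^sub>E UNIV X" "finite {i. X i \<noteq> topspace euclidean}" "Pi\<^sub>E UNIV X \<subseteq> U"
    by auto
  have "eventually (\<lambda>k. \<forall>i\<in>{i. X i \<noteq> UNIV}. s k i = \<alpha> i) F"
    using X(2) assms by (intro eventually_ball_finite) auto
  then show "eventually (\<lambda>k. s k \<in> U) F"
  proof (rule eventually_mono)
    fix k assume H: "\<forall>i\<in>{i. X i \<noteq> UNIV}. s k i = \<alpha> i"
    have "s k \<in> Pi\<^sub>E UNIV X"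
    proof -
      have "s k i \<in> X i" for i
        using H X(1) by (cases "X i = UNIV") (auto simp: PiE_iff)
      then show ?thesis by (auto simp: PiE_iff)
    qed
    then show "s k \<in> U" using X(3) by auto
  qed
qed

lemma tendsto_baire_coord:
  fixes s :: "'i \<Rightarrow> nat \<Rightarrow> nat"
  assumes "(s \<longlongrightarrow> \<alpha>) F"
  shows "eventually (\<lambda>k. s k i = \<alpha> i) F"
  using topological_tendstoD[OF assms open_coord[of i "{\<alpha> i}"]] by simp

lemma compact_cube: "compact {\<alpha>::nat\<Rightarrow>nat. \<forall>i. \<alpha> i \<le> b i}"
proof -
  have eq: "{\<alpha>::nat\<Rightarrow>nat. \<forall>i. \<alpha> i \<le> b i} = Pi\<^sub>E UNIV (\<lambda>i. {..b i})"
    by (auto simp: PiE_iff)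
  have "compactin (product_topology (\<lambda>i. euclidean) UNIV) (Pi\<^sub>E UNIV (\<lambda>i. {..b i}))"
    by (simp add: compactin_PiE compactin_euclidean_iff finite_imp_compact)
  then show ?thesis unfolding eq by (simp add: euclidean_product_topology compactin_euclidean_iff)
qed

lemma continuous_on_local:
  assumes "\<And>x. x \<in> S \<Longrightarrow> \<exists>U. open U \<and> x \<in> U \<and> continuous_on (S \<inter> U) f"
  shows "continuous_on S f"
  unfolding continuous_on_def
proof
  fix x assume x: "x \<in> S"
  obtain U where U: "open U" "x \<in> U" "continuous_on (S \<inter> U) f" using assms[OF x] by blast
  have "at x within S = at x within (S \<inter> U)"
    by (rule at_within_nhd[OF U(2) U(1)]) auto
  moreover have "(f \<longlongrightarrow> f x) (at x within (S \<inter> U))"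
    using U(3) x U(2) unfolding continuous_on_def by auto
  ultimately show "(f \<longlongrightarrow> f x) (at x within S)" by simp
qed

section \<open>Analytic sets\<close>

definition analytic :: "'b::topological_space set \<Rightarrow> bool" where
  "analytic P \<longleftrightarrow> (\<exists>(C::(nat\<Rightarrow>nat) set) f. closed C \<and> continuous_on C f \<and> f ` C = P)"

lemma analytic_empty: "analytic {}"
  unfolding analytic_def by (rule exI[of _ "{}"]) auto

lemma analytic_image:
  assumes "continuous_on UNIV g" "analytic P"
  shows "analytic (g ` P)"
proof -
  from assms(2) obtain C and f :: "(nat\<Rightarrow>nat) \<Rightarrow> _" where
    Cf: "closed C" "continuous_on C f" "f ` C = P"
    unfolding analytic_def by blast
  have "continuous_on C (g \<circ> f)"
    by (rule continuous_on_compose[OF Cf(2) continuous_on_subset[OF assms(1)]]) simp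
  moreover have "(g \<circ> f) ` C = g ` P" unfolding Cf(3)[symmetric] by (simp only: image_comp)
  ultimately show ?thesis using Cf(1) unfolding analytic_def by blast
qed

lemma cont_shift: "continuous_on UNIV (\<lambda>\<alpha>::nat\<Rightarrow>nat. \<lambda>i. \<alpha> (g i))"
  by (intro continuous_on_coordinatewise_then_product continuous_on_product_coordinates)

lemma analytic_Union:
  fixes P :: "nat \<Rightarrow> 'b::topological_space set"
  assumes "\<And>n::nat. analytic (P n)"
  shows "analytic (\<Union>n. P n)"
proof -
  have "\<exists>Cf::(nat\<Rightarrow>nat) set \<times> ((nat\<Rightarrow>nat) \<Rightarrow> 'b). closed (fst Cf) \<and> continuous_on (fst Cf) (snd Cf) \<and> snd Cf ` fst Cf = P n" for n
  proof -
    from assms[of n] obtain C and f :: "(nat\<Rightarrow>nat) \<Rightarrow> _" where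
      "closed C" "continuous_on C f" "f ` C = P n"
      unfolding analytic_def by blast
    then show ?thesis by (intro exI[of _ "(C, f)"]) simp
  qed
  then have "\<forall>n. \<exists>Cf::(nat\<Rightarrow>nat) set \<times> ((nat\<Rightarrow>nat) \<Rightarrow> 'b). closed (fst Cf) \<and> continuous_on (fst Cf) (snd Cf) \<and> snd Cf ` fst Cf = P n"
    by blast
  from choice[OF this] obtain CF :: "nat \<Rightarrow> (nat\<Rightarrow>nat) set \<times> ((nat\<Rightarrow>nat) \<Rightarrow> 'b)" where
    CF: "\<forall>n. closed (fst (CF n)) \<and> continuous_on (fst (CF n)) (snd (CF n)) \<and> snd (CF n) ` fst (CF n) = P n" by blast
  define C where "C = (\<lambda>n. fst (CF n))"
  define f where "f = (\<lambda>n. snd (CF n))"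
  have Cf: "\<And>n. closed (C n)" "\<And>n. continuous_on (C n) (f n)"
      "\<And>n. f n ` C n = P n" using CF by (auto simp: C_def f_def)
  define sh where "sh = (\<lambda>\<alpha>::nat\<Rightarrow>nat. \<lambda>i. \<alpha> (Suc i))"
  have shc: "continuous_on UNIV sh" unfolding sh_def by (rule cont_shift)
  define C' where "C' = {\<alpha>. sh \<alpha> \<in> C (\<alpha> 0)}"
  define g where "g = (\<lambda>\<alpha>. f (\<alpha> 0) (sh \<alpha>))"
  have "- C' = (\<Union>n. {\<alpha>. \<alpha> 0 \<in> {n}} \<inter> sh -` (- C n))"
    unfolding C'_def by auto
  moreover have "open (\<Union>n. {\<alpha>. \<alpha> 0 \<in> {n}} \<inter> sh -` (- C n))"
    using Cf(1) shc by (intro open_UN ballI open_Int open_coord open_vimage) auto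
  ultimately have "closed C'" unfolding closed_def by simp
  moreover have "continuous_on C' g"
  proof (rule continuous_on_local)
    fix \<alpha> assume "\<alpha> \<in> C'"
    define U where "U = {\<beta>::nat\<Rightarrow>nat. \<beta> 0 \<in> {\<alpha> 0}}"
    have "continuous_on (C' \<inter> U) (\<lambda>\<beta>. f (\<alpha> 0) (sh \<beta>))"
      by (rule continuous_on_compose2[OF Cf(2)[of "\<alpha> 0"] continuous_on_subset[OF shc]])
         (auto simp: C'_def U_def)
    then have "continuous_on (C' \<inter> U) g"
      by (rule continuous_on_cong[THEN iffD1, rotated 2]) (auto simp: g_def U_def)
    moreover have "open U" unfolding U_def by (rule open_coord)
    moreover have "\<alpha> \<in> U" unfolding U_def by simp
    ultimately show "\<exists>U. open U \<and> \<alpha> \<in> U \<and> continuous_on (C' \<inter> U) g"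
      by blast
  qed
  moreover have "g ` C' = (\<Union>n. P n)"
  proof
    show "g ` C' \<subseteq> (\<Union>n. P n)" using Cf(3) by (auto simp: g_def C'_def)
    show "(\<Union>n. P n) \<subseteq> g ` C'"
    proof
      fix x assume "x \<in> (\<Union>n. P n)"
      then obtain n \<beta> where "\<beta> \<in> C n" "x = f n \<beta>" using Cf(3) by blast
      moreover have "sh (case_nat n \<beta>) = \<beta>" by (simp add: sh_def)
      ultimately show "x \<in> g ` C'"
        by (intro image_eqI[of _ _ "case_nat n \<beta>"]) (auto simp: g_def C'_def)
    qed
  qed
  ultimately show ?thesis unfolding analytic_def by blast
qed

lemma analytic_Inter:
  fixes P :: "nat \<Rightarrow> 'b::t2_space set"
  assumes "\<And>n::nat. analytic (P n)"
  shows "analytic (\<Inter>n. P n)"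
proof -
  have "\<exists>Cf::(nat\<Rightarrow>nat) set \<times> ((nat\<Rightarrow>nat) \<Rightarrow> 'b). closed (fst Cf) \<and> continuous_on (fst Cf) (snd Cf) \<and> snd Cf ` fst Cf = P n" for n
  proof -
    from assms[of n] obtain C and f :: "(nat\<Rightarrow>nat) \<Rightarrow> _" where
      "closed C" "continuous_on C f" "f ` C = P n"
      unfolding analytic_def by blast
    then show ?thesis by (intro exI[of _ "(C, f)"]) simp
  qed
  then have "\<forall>n. \<exists>Cf::(nat\<Rightarrow>nat) set \<times> ((nat\<Rightarrow>nat) \<Rightarrow> 'b). closed (fst Cf) \<and> continuous_on (fst Cf) (snd Cf) \<and> snd Cf ` fst Cf = P n"
    by blast
  from choice[OF this] obtain CF :: "nat \<Rightarrow> (nat\<Rightarrow>nat) set \<times> ((nat\<Rightarrow>nat) \<Rightarrow> 'b)" where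
    CF: "\<forall>n. closed (fst (CF n)) \<and> continuous_on (fst (CF n)) (snd (CF n)) \<and> snd (CF n) ` fst (CF n) = P n" by blast
  define C where "C = (\<lambda>n. fst (CF n))"
  define f where "f = (\<lambda>n. snd (CF n))"
  have Cf: "\<And>n. closed (C n)" "\<And>n. continuous_on (C n) (f n)"
      "\<And>n. f n ` C n = P n" using CF by (auto simp: C_def f_def)
  define cp where "cp = (\<lambda>n (\<alpha>::nat\<Rightarrow>nat). \<lambda>i. \<alpha> (prod_encode (n, i)))"
  have cpc: "continuous_on UNIV (cp n)" for n unfolding cp_def by (rule cont_shift)
  define K where "K = (\<lambda>n. cp n -` C n)"
  have Kc: "closed (K n)" for n unfolding K_def by (intro closed_vimage Cf(1) cpc)
  define D where "D = (\<lambda>n. {\<alpha> \<in> K n \<inter> K 0. f n (cp n \<alpha>) = f 0 (cp 0 \<alpha>)})"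
  have Dc: "closed (D n)" for n
  proof -
    have c1: "continuous_on (K n \<inter> K 0) (\<lambda>\<alpha>. f n (cp n \<alpha>))"
      by (rule continuous_on_compose2[OF Cf(2)[of n] continuous_on_subset[OF cpc]]) (auto simp: K_def)
    have c2: "continuous_on (K n \<inter> K 0) (\<lambda>\<alpha>. f 0 (cp 0 \<alpha>))"
      by (rule continuous_on_compose2[OF Cf(2)[of 0] continuous_on_subset[OF cpc]]) (auto simp: K_def)
    have "D n = (K n \<inter> K 0) \<inter> (\<lambda>\<alpha>. (f n (cp n \<alpha>), f 0 (cp 0 \<alpha>))) -` {y. \<exists>x. y = (x, x)}"
      unfolding D_def by auto
    moreover have "closed ((K n \<inter> K 0) \<inter> (\<lambda>\<alpha>. (f n (cp n \<alpha>), f 0 (cp 0 \<alpha>))) -` {y. \<exists>x. y = (x, x)})"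
      by (intro continuous_closed_preimage continuous_on_Pair c1 c2 closed_Int Kc closed_diagonal)
    ultimately show ?thesis by simp
  qed
  define C' where "C' = (\<Inter>n. D n)"
  define g where "g = (\<lambda>\<alpha>. f 0 (cp 0 \<alpha>))"
  have "closed C'" unfolding C'_def using Dc by auto
  moreover have "continuous_on C' g"
    unfolding g_def
    by (rule continuous_on_compose2[OF Cf(2)[of 0] continuous_on_subset[OF cpc]])
       (auto simp: C'_def D_def K_def)
  moreover have "g ` C' = (\<Inter>n. P n)"
  proof
    show "g ` C' \<subseteq> (\<Inter>n. P n)"
    proof
      fix x assume "x \<in> g ` C'"
      then obtain \<alpha> where a: "\<alpha> \<in> C'" "x = g \<alpha>" by auto
      show "x \<in> (\<Inter>n. P n)"
      proof
        fix n
        have "\<alpha> \<in> D n" using a C'_def by auto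
        then have "x = f n (cp n \<alpha>)" "cp n \<alpha> \<in> C n" using a by (auto simp: D_def K_def g_def)
        then show "x \<in> P n" using Cf(3) by blast
      qed
    qed
    show "(\<Inter>n. P n) \<subseteq> g ` C'"
    proof
      fix x assume x: "x \<in> (\<Inter>n. P n)"
      have "x \<in> f n ` C n" for n using x Cf(3) by simp
      then have "\<forall>n. \<exists>\<beta>. \<beta> \<in> C n \<and> f n \<beta> = x" by (metis imageE)
      from choice[OF this] obtain \<beta> where b0: "\<forall>n. \<beta> n \<in> C n \<and> f n (\<beta> n) = x" by blast
      then have b: "\<And>n. \<beta> n \<in> C n" "\<And>n. f n (\<beta> n) = x" by auto
      define \<alpha> where "\<alpha> = (\<lambda>j. \<beta> (fst (prod_decode j)) (snd (prod_decode j)))"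
      have cpa: "cp n \<alpha> = \<beta> n" for n by (simp add: cp_def \<alpha>_def)
      have "\<alpha> \<in> D n" for n unfolding D_def K_def using b by (simp add: cpa)
      then have "\<alpha> \<in> C'" unfolding C'_def by blast
      moreover have "g \<alpha> = x" by (simp add: g_def cpa b)
      ultimately show "x \<in> g ` C'" by blast
    qed
  qed
  ultimately show ?thesis unfolding analytic_def by blast
qed

lemma analytic_closed:
  fixes F :: "'b::{complete_space, second_countable_topology} set"
  assumes "closed F"
  shows "analytic F"
proof -
  obtain D :: "'b set" where D: "countable D" "\<And>X. open X \<Longrightarrow> X \<noteq> {} \<Longrightarrow> \<exists>d\<in>D. d \<in> X"
    using countable_dense_exists by blast
  have "D \<noteq> {}" using D(2)[of UNIV] by auto
  define d where "d = from_nat_into D"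
  have dense: "\<exists>i. d i \<in> X" if "open X" "X \<noteq> {}" for X
  proof -
    obtain y where "y \<in> D" "y \<in> X" using D(2)[OF \<open>open X\<close> \<open>X \<noteq> {}\<close>] by blast
    then obtain i where "from_nat_into D i = y" using from_nat_into_surj[OF D(1)] by blast
    then show ?thesis using \<open>y \<in> X\<close> unfolding d_def by blast
  qed
  define C0 where "C0 = {\<alpha>::nat\<Rightarrow>nat. \<forall>n m. n \<le> m \<longrightarrow> dist (d (\<alpha> n)) (d (\<alpha> m)) \<le> (1/2::real)^n}"
  have C0c: "closed C0"
  proof -
    have "C0 = (\<Inter>n. \<Inter>m. {\<alpha>::nat\<Rightarrow>nat. (\<lambda>a b. n \<le> m \<longrightarrow> dist (d a) (d b) \<le> (1/2::real)^n) (\<alpha> n) (\<alpha> m)})"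
      unfolding C0_def by auto
    moreover have "closed (\<Inter>n. \<Inter>m. {\<alpha>::nat\<Rightarrow>nat. (\<lambda>a b. n \<le> m \<longrightarrow> dist (d a) (d b) \<le> (1/2::real)^n) (\<alpha> n) (\<alpha> m)})"
      by (intro closed_INT ballI closed_coord2)
    ultimately show ?thesis by simp
  qed
  define L where "L = (\<lambda>\<alpha>::nat\<Rightarrow>nat. lim (\<lambda>n. d (\<alpha> n)))"
  have conv: "(\<lambda>n. d (\<alpha> n)) \<longlonglongrightarrow> L \<alpha>" if "\<alpha> \<in> C0" for \<alpha>
  proof -
    have "Cauchy (\<lambda>n. d (\<alpha> n))"
    proof (rule metric_CauchyI)
      fix e :: real assume "e > 0"
      obtain M where M: "(1/2::real)^M < e" using real_arch_pow_inv[OF \<open>e > 0\<close>, of "1/2"] by auto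
      show "\<exists>M. \<forall>m\<ge>M. \<forall>n\<ge>M. dist (d (\<alpha> m)) (d (\<alpha> n)) < e"
      proof (intro exI allI impI)
        fix m n assume mn: "M \<le> m" "M \<le> n"
        have "dist (d (\<alpha> m)) (d (\<alpha> n)) \<le> (1/2::real)^(min m n)"
        proof (cases "m \<le> n")
          case True then show ?thesis using that unfolding C0_def by (auto simp: min_def)
        next
          case False
          then have "dist (d (\<alpha> n)) (d (\<alpha> m)) \<le> (1/2::real)^n" using that unfolding C0_def by auto
          moreover have "dist (d (\<alpha> m)) (d (\<alpha> n)) = dist (d (\<alpha> n)) (d (\<alpha> m))" by (rule dist_commute)
          ultimately show ?thesis using False by (simp add: min_def)
        qed
        also have "\<dots> \<le> (1/2)^M" using mn by (intro power_decreasing) auto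
        finally show "dist (d (\<alpha> m)) (d (\<alpha> n)) < e" using M by simp
      qed
    qed
    then have "convergent (\<lambda>n. d (\<alpha> n))" by (rule Cauchy_convergent)
    then show ?thesis unfolding L_def by (simp only: convergent_LIMSEQ_iff)
  qed
  have bound: "dist (d (\<alpha> n)) (L \<alpha>) \<le> (1/2::real)^n" if "\<alpha> \<in> C0" for \<alpha> n
  proof (rule Lim_bounded[OF tendsto_dist[OF tendsto_const conv[OF that]]])
    show "\<forall>m\<ge>n. dist (d (\<alpha> n)) (d (\<alpha> m)) \<le> (1/2::real)^n" using that unfolding C0_def by auto
  qed
  have Lc: "continuous_on C0 L"
    unfolding continuous_on_topological
  proof (intro ballI allI impI)
    fix \<alpha> B assume a: "\<alpha> \<in> C0" and B: "open B" "L \<alpha> \<in> B"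
    obtain e where e: "e > 0" "ball (L \<alpha>) e \<subseteq> B" using B openE by blast
    obtain n where n: "(1/2::real)^n < e/2" using real_arch_pow_inv[of "e/2" "1/2"] e by auto
    show "\<exists>A. open A \<and> \<alpha> \<in> A \<and> (\<forall>y\<in>C0. y \<in> A \<longrightarrow> L y \<in> B)"
    proof (intro exI conjI ballI impI)
      show "open {\<beta>::nat\<Rightarrow>nat. \<beta> n \<in> {\<alpha> n}}" by (rule open_coord)
      show "\<alpha> \<in> {\<beta>::nat\<Rightarrow>nat. \<beta> n \<in> {\<alpha> n}}" by simp
      fix \<beta> assume "\<beta> \<in> C0" "\<beta> \<in> {\<beta>::nat\<Rightarrow>nat. \<beta> n \<in> {\<alpha> n}}"
      then have "\<beta> n = \<alpha> n" "\<beta> \<in> C0" by auto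
      then have "dist (L \<alpha>) (L \<beta>) \<le> dist (L \<alpha>) (d (\<alpha> n)) + dist (d (\<beta> n)) (L \<beta>)"
        using dist_triangle[of "L \<alpha>" "L \<beta>" "d (\<alpha> n)"] by simp
      also have "\<dots> \<le> (1/2)^n + (1/2)^n"
        using bound[OF a, of n] bound[OF \<open>\<beta> \<in> C0\<close>, of n] by (simp add: dist_commute)
      finally have "dist (L \<alpha>) (L \<beta>) < e" using n by simp
      then show "L \<beta> \<in> B" using e(2) by auto
    qed
  qed
  define C where "C = C0 \<inter> L -` F"
  have "closed C" unfolding C_def by (rule continuous_closed_preimage[OF Lc C0c assms])
  moreover have "continuous_on C L" using Lc by (rule continuous_on_subset) (auto simp: C_def)
  moreover have "L ` C = F"
  proof
    show "L ` C \<subseteq> F" unfolding C_def by auto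
    show "F \<subseteq> L ` C"
    proof
      fix x assume "x \<in> F"
      have "\<exists>i. d i \<in> ball x ((1/2::real)^(Suc n))" for n
      proof (rule dense)
        have "x \<in> ball x ((1/2::real)^(Suc n))" by (simp only: centre_in_ball) simp
        then show "ball x ((1/2::real)^(Suc n)) \<noteq> {}" by blast
      qed simp
      then have "\<forall>n. \<exists>i. d i \<in> ball x ((1/2::real)^(Suc n))" by blast
      from choice[OF this] obtain \<alpha> where a: "\<And>n. dist x (d (\<alpha> n)) < (1/2::real)^(Suc n)"
        by auto
      have "\<alpha> \<in> C0" unfolding C0_def mem_Collect_eq
      proof (intro allI impI)
        fix n m :: nat assume "n \<le> m"
        have "dist (d (\<alpha> n)) (d (\<alpha> m)) \<le> dist x (d (\<alpha> n)) + dist x (d (\<alpha> m))"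
          by (rule dist_triangle3)
        also have "\<dots> \<le> (1/2)^(Suc n) + (1/2)^(Suc n)"
        proof -
          have p: "(1/2::real)^(Suc m) \<le> (1/2)^(Suc n)" using \<open>n \<le> m\<close> by (intro power_decreasing) auto
          show ?thesis using a[of n] a[of m] p by linarith
        qed
        also have "\<dots> = (1/2::real)^n" by simp
        finally show "dist (d (\<alpha> n)) (d (\<alpha> m)) \<le> (1/2::real)^n" .
      qed
      moreover have "(\<lambda>n. d (\<alpha> n)) \<longlonglongrightarrow> x"
      proof -
        have "(\<lambda>n. (1/2::real)^(Suc n)) \<longlonglongrightarrow> 0"
          by (intro LIMSEQ_power_zero[THEN LIMSEQ_Suc]) auto
        then have "(\<lambda>n. dist (d (\<alpha> n)) x) \<longlonglongrightarrow> 0"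
          by (rule Lim_null_comparison[rotated]) (use a in \<open>auto simp: dist_commute less_imp_le\<close>)
        then show ?thesis by (rule tendsto_dist_iff[THEN iffD2])
      qed
      ultimately have "L \<alpha> = x" using conv LIMSEQ_unique by blast
      then show "x \<in> L ` C" using \<open>\<alpha> \<in> C0\<close> \<open>x \<in> F\<close> unfolding C_def by auto
    qed
  qed
  ultimately show ?thesis unfolding analytic_def by blast
qed

lemma analytic_open:
  fixes U :: "'b::{complete_space, second_countable_topology} set"
  assumes "open U"
  shows "analytic U"
proof (cases "U = UNIV")
  case True then show ?thesis using analytic_closed by auto
next
  case False
  have "U = (\<Union>n. {x. inverse (real (Suc n)) \<le> infdist x (- U)})"
  proof
    show "U \<subseteq> (\<Union>n. {x. inverse (real (Suc n)) \<le> infdist x (- U)})"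
    proof
      fix x assume "x \<in> U"
      then have "infdist x (- U) > 0"
        using False assms by (intro infdist_pos_not_in_closed) auto
      then obtain n where "inverse (real (Suc n)) < infdist x (- U)"
        using reals_Archimedean by blast
      then have "x \<in> {x. inverse (real (Suc n)) \<le> infdist x (- U)}" by simp
      then show "x \<in> (\<Union>n. {x. inverse (real (Suc n)) \<le> infdist x (- U)})" by blast
    qed
    show "(\<Union>n. {x. inverse (real (Suc n)) \<le> infdist x (- U)}) \<subseteq> U"
    proof
      fix x assume "x \<in> (\<Union>n. {x. inverse (real (Suc n)) \<le> infdist x (- U)})"
      then obtain n where "inverse (real (Suc n)) \<le> infdist x (- U)" by auto
      then have "infdist x (- U) \<noteq> 0" by (metis inverse_positive_iff_positive of_nat_0_less_iff zero_less_Suc not_le order_refl)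
      then show "x \<in> U" using infdist_zero by (metis ComplI)
    qed
  qed
  moreover have "analytic {x. inverse (real (Suc n)) \<le> infdist x (- U)}" for n
    by (intro analytic_closed closed_Collect_le continuous_on_const continuous_on_infdist continuous_on_id)
  ultimately show ?thesis by (metis analytic_Union)
qed

lemma analytic_borel:
  fixes S :: "'b::{complete_space, second_countable_topology} set"
  assumes "S \<in> sets borel"
  shows "analytic S"
proof -
  have "S \<in> sigma_sets UNIV {S. open S}" using assms by (simp add: sets_borel)
  then have "analytic S \<and> analytic (UNIV - S)"
  proof induction
    case (Basic a)
    then show ?case by (auto intro: analytic_open analytic_closed)
  next
    case Empty
    then show ?case by (simp add: analytic_empty analytic_closed)
  next
    case (Compl a)
    then show ?case by (simp add: Diff_Diff_Int)
  next
    case (Union A)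
    have "UNIV - (\<Union>i. A i) = (\<Inter>i. UNIV - A i)" by auto
    moreover have "analytic (\<Union>i. A i)" by (rule analytic_Union) (use Union in auto)
    moreover have "analytic (\<Inter>i. UNIV - A i)" by (rule analytic_Inter) (use Union in auto)
    ultimately show ?case by simp
  qed
  then show ?thesis by simp
qed

definition om :: "'a measure \<Rightarrow> 'a set \<Rightarrow> real" where
  "om M A = Inf (measure M ` {B \<in> sets M. A \<subseteq> B})"

lemma le_of_eps:
  fixes x y :: real
  assumes "\<And>n. x \<le> y + inverse (real (Suc n))"
  shows "x \<le> y"
proof (rule ccontr)
  assume "\<not> x \<le> y"
  then have "x - y > 0" by simp
  then obtain n where "inverse (real (Suc n)) < x - y" using reals_Archimedean by blast
  then show False using assms[of n] by simp
qed

context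
  fixes \<mu> :: "'b::metric_space measure"
  assumes sets_mu: "sets \<mu> = sets borel" and fin: "finite_measure \<mu>"
begin

lemma space_mu: "space \<mu> = UNIV"
  using sets_eq_imp_space_eq[OF sets_mu] by simp

lemma closed_in_mu: "closed S \<Longrightarrow> S \<in> sets \<mu>"
  unfolding sets_mu by (rule borel_closed)

lemma om_set_ne: "measure \<mu> ` {B \<in> sets \<mu>. A \<subseteq> B} \<noteq> {}"
proof -
  have "UNIV \<in> sets \<mu>" using sets.top[of \<mu>] space_mu by simp
  then show ?thesis by auto
qed

lemma om_bdd: "bdd_below (measure \<mu> ` {B \<in> sets \<mu>. A \<subseteq> B})"
  by (rule bdd_belowI[of _ 0]) auto

lemma om_le: "B \<in> sets \<mu> \<Longrightarrow> A \<subseteq> B \<Longrightarrow> om \<mu> A \<le> measure \<mu> B"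
  unfolding om_def by (rule cInf_lower[OF _ om_bdd]) auto

lemma om_hull: "\<exists>H. H \<in> sets \<mu> \<and> A \<subseteq> H \<and> measure \<mu> H = om \<mu> A"
proof -
  have "\<exists>B. B \<in> sets \<mu> \<and> A \<subseteq> B \<and> measure \<mu> B < om \<mu> A + inverse (real (Suc n))" for n
  proof -
    have "Inf (measure \<mu> ` {B \<in> sets \<mu>. A \<subseteq> B}) < om \<mu> A + inverse (real (Suc n))"
      unfolding om_def by simp
    from cInf_lessD[OF om_set_ne this] show ?thesis by auto
  qed
  then have "\<forall>n. \<exists>B. B \<in> sets \<mu> \<and> A \<subseteq> B \<and> measure \<mu> B < om \<mu> A + inverse (real (Suc n))"
    by blast
  from choice[OF this] obtain B where
    B: "\<And>n. B n \<in> sets \<mu>" "\<And>n. A \<subseteq> B n" "\<And>n. measure \<mu> (B n) < om \<mu> A + inverse (real (Suc n))"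
    by blast
  interpret F: finite_measure \<mu> by (rule fin)
  define H where "H = (\<Inter>n. B n)"
  have Hs: "H \<in> sets \<mu>" unfolding H_def using B(1) by (intro sets.countable_INT) auto
  have AH: "A \<subseteq> H" unfolding H_def using B(2) by auto
  have "measure \<mu> H \<le> om \<mu> A"
  proof (rule le_of_eps)
    fix n
    have "measure \<mu> H \<le> measure \<mu> (B n)"
      by (rule F.finite_measure_mono) (auto simp: H_def B(1))
    then show "measure \<mu> H \<le> om \<mu> A + inverse (real (Suc n))" using B(3)[of n] by simp
  qed
  moreover have "om \<mu> A \<le> measure \<mu> H" by (rule om_le[OF Hs AH])
  ultimately show ?thesis using Hs AH by (intro exI[of _ H]) auto
qed

lemma om_incseq:
  assumes inc: "incseq A" and t: "t < om \<mu> (\<Union>n. A n)"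
  shows "\<exists>n. t < om \<mu> (A n)"
proof (rule ccontr)
  assume "\<not> (\<exists>n. t < om \<mu> (A n))"
  then have le: "om \<mu> (A n) \<le> t" for n by (meson not_less)
  interpret F: finite_measure \<mu> by (rule fin)
  have "\<forall>n. \<exists>H. H \<in> sets \<mu> \<and> A n \<subseteq> H \<and> measure \<mu> H = om \<mu> (A n)"
    using om_hull by blast
  from choice[OF this] obtain H where
    H: "\<And>n. H n \<in> sets \<mu>" "\<And>n. A n \<subseteq> H n" "\<And>n. measure \<mu> (H n) = om \<mu> (A n)" by blast
  define H' where "H' = (\<lambda>n. \<Inter>m. H (m + n))"
  have H's: "H' n \<in> sets \<mu>" for n unfolding H'_def using H(1) by (intro sets.countable_INT) auto
  have AH': "A n \<subseteq> H' n" for n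
  proof -
    have "A n \<subseteq> H (m + n)" for m
      using monoD[OF inc, of n "m + n"] H(2)[of "m + n"] by auto
    then show ?thesis unfolding H'_def by auto
  qed
  have incH': "incseq H'"
  proof (rule incseq_SucI)
    fix n
    show "H' n \<subseteq> H' (Suc n)" unfolding H'_def
    proof
      fix x assume "x \<in> (\<Inter>m. H (m + n))"
      then have "x \<in> H (Suc m + n)" for m by blast
      then show "x \<in> (\<Inter>m. H (m + Suc n))" by simp
    qed
  qed
  have mH': "measure \<mu> (H' n) \<le> t" for n
  proof -
    have sub: "H' n \<subseteq> H n"
    proof
      fix x assume "x \<in> H' n"
      then have "x \<in> H (0 + n)" unfolding H'_def by blast
      then show "x \<in> H n" by simp
    qed
    have "measure \<mu> (H' n) \<le> measure \<mu> (H n)"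
      by (rule F.finite_measure_mono[OF sub H(1)])
    then show ?thesis using H(3)[of n] le[of n] by simp
  qed
  have lim: "(\<lambda>n. measure \<mu> (H' n)) \<longlonglongrightarrow> measure \<mu> (\<Union>n. H' n)"
    by (rule Lim_measure_incseq) (use H's incH' F.emeasure_finite in auto)
  have "measure \<mu> (\<Union>n. H' n) \<le> t"
    by (rule LIMSEQ_le_const2[OF lim]) (use mH' in auto)
  moreover have "om \<mu> (\<Union>n. A n) \<le> measure \<mu> (\<Union>n. H' n)"
    by (rule om_le) (use H's AH' in auto)
  ultimately show False using t by simp
qed

lemma analytic_inner:
  assumes "analytic P" and t: "t < om \<mu> P"
  shows "\<exists>K. compact K \<and> K \<subseteq> P \<and> t \<le> measure \<mu> K"
proof -
  interpret F: finite_measure \<mu> by (rule fin)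
  from assms(1) obtain C and f :: "(nat\<Rightarrow>nat) \<Rightarrow> 'b" where
    Cf: "closed C" "continuous_on C f" "f ` C = P"
    unfolding analytic_def by blast
  define Ck where "Ck = (\<lambda>(b::nat\<Rightarrow>nat) k. {\<alpha> \<in> C. \<forall>i<k. \<alpha> i \<le> b i})"
  define PP where "PP = (\<lambda>k g. t < om \<mu> (f ` Ck g k))"
  define QQ where "QQ = (\<lambda>(k::nat) (g::nat\<Rightarrow>nat) (y::nat\<Rightarrow>nat). \<forall>i<k. y i = g i)"
  have base: "\<exists>g. PP 0 g" unfolding PP_def Ck_def using t Cf(3) by simp
  have step: "\<exists>y. PP (Suc k) y \<and> QQ k g y" if "PP k g" for k g
  proof -
    define S where "S = (\<lambda>m. f ` Ck (g(k := m)) (Suc k))"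
    have "incseq S" unfolding S_def Ck_def
      by (rule incseq_SucI) (auto intro!: image_mono simp: less_Suc_eq)
    moreover have "(\<Union>m. S m) = f ` Ck g k"
    proof
      show "(\<Union>m. S m) \<subseteq> f ` Ck g k" unfolding S_def Ck_def by (auto intro!: image_mono)
      show "f ` Ck g k \<subseteq> (\<Union>m. S m)"
      proof
        fix y assume "y \<in> f ` Ck g k"
        then obtain \<alpha> where a: "\<alpha> \<in> Ck g k" "y = f \<alpha>" by auto
        then have "\<alpha> \<in> Ck (g(k := \<alpha> k)) (Suc k)" unfolding Ck_def by (auto simp: less_Suc_eq)
        then show "y \<in> (\<Union>m. S m)" unfolding S_def using a(2) by blast
      qed
    qed
    moreover have "t < om \<mu> (f ` Ck g k)" using that unfolding PP_def .
    ultimately have "t < om \<mu> (\<Union>m. S m)" by simp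
    from om_incseq[OF \<open>incseq S\<close> this] obtain m where "t < om \<mu> (S m)" by blast
    then show ?thesis unfolding PP_def QQ_def S_def
      by (intro exI[of _ "g(k := m)"]) auto
  qed
  obtain gs where gs: "\<And>k. PP k (gs k) \<and> QQ k (gs k) (gs (Suc k))"
    using dependent_nat_choice[of PP QQ, OF base step] by blast
  define b where "b = (\<lambda>i. gs (Suc i) i)"
  have gsb: "i < k \<Longrightarrow> gs k i = b i" for i k
  proof (induction k)
    case 0 then show ?case by simp
  next
    case (Suc k)
    show ?case
    proof (cases "i < k")
      case True
      then have "gs (Suc k) i = gs k i" using gs[of k] unfolding QQ_def by auto
      then show ?thesis using Suc True by simp
    next
      case False
      then have "i = k" using Suc by simp
      then show ?thesis unfolding b_def by simp
    qed
  qed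
  have Ckb: "Ck (gs k) k = Ck b k" for k unfolding Ck_def using gsb by auto
  have tk: "t < om \<mu> (f ` Ck b k)" for k using gs[of k] unfolding PP_def Ckb by simp
  define cube where "cube = {\<alpha>::nat\<Rightarrow>nat. \<forall>i. \<alpha> i \<le> b i}"
  define K where "K = f ` (C \<inter> cube)"
  have cK: "compact K"
    unfolding K_def
  proof (rule compact_continuous_image)
    show "continuous_on (C \<inter> cube) f" using Cf(2) by (rule continuous_on_subset) auto
    show "compact (C \<inter> cube)" unfolding cube_def using Cf(1) compact_cube by (rule closed_Int_compact)
  qed
  have KP: "K \<subseteq> P" unfolding K_def using Cf(3) by auto
  define CL where "CL = (\<lambda>k. closure (f ` Ck b k))"
  have CLs: "CL k \<in> sets \<mu>" for k unfolding CL_def by (rule closed_in_mu) simp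
  have decCL: "decseq CL" unfolding CL_def
    by (rule decseq_SucI, rule closure_mono, rule image_mono) (auto simp: Ck_def)
  have mCL: "t \<le> measure \<mu> (CL k)" for k
  proof -
    have "om \<mu> (f ` Ck b k) \<le> measure \<mu> (CL k)" unfolding CL_def
      by (rule om_le[OF _ closure_subset]) (rule closed_in_mu, simp)
    then show ?thesis using tk[of k] by simp
  qed
  have limCL: "(\<lambda>k. measure \<mu> (CL k)) \<longlonglongrightarrow> measure \<mu> (\<Inter>k. CL k)"
    by (rule Lim_measure_decseq) (use CLs decCL F.emeasure_finite in auto)
  have t_le: "t \<le> measure \<mu> (\<Inter>k. CL k)"
    by (rule LIMSEQ_le_const[OF limCL]) (use mCL in auto)
  have sub: "(\<Inter>k. CL k) \<subseteq> K"
  proof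
    fix y assume y: "y \<in> (\<Inter>k. CL k)"
    have "\<exists>\<alpha>. \<alpha> \<in> Ck b k \<and> dist (f \<alpha>) y < inverse (real (Suc k))" for k
    proof -
      have "y \<in> closure (f ` Ck b k)" using y unfolding CL_def by blast
      then obtain z where "z \<in> f ` Ck b k" "dist z y < inverse (real (Suc k))"
        unfolding closure_approachable by (meson inverse_positive_iff_positive of_nat_0_less_iff zero_less_Suc)
      then show ?thesis by auto
    qed
    then have "\<forall>k. \<exists>\<alpha>. \<alpha> \<in> Ck b k \<and> dist (f \<alpha>) y < inverse (real (Suc k))" by blast
    from choice[OF this] obtain \<alpha> where
      a: "\<And>k. \<alpha> k \<in> Ck b k" "\<And>k. dist (f (\<alpha> k)) y < inverse (real (Suc k))" by blast
    define \<beta> where "\<beta> = (\<lambda>k i. min (\<alpha> k i) (b i))"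
    have "\<forall>k. \<beta> k \<in> cube" unfolding \<beta>_def cube_def by auto
    from seq_compactE[OF compact_imp_seq_compact[OF compact_cube[of b, folded cube_def]] this]
    obtain \<gamma> r where g: "\<gamma> \<in> cube" "strict_mono r" "(\<beta> \<circ> r) \<longlonglongrightarrow> \<gamma>" by blast
    have ev: "eventually (\<lambda>j. \<alpha> (r j) i = \<gamma> i) sequentially" for i
    proof -
      have e1: "eventually (\<lambda>j. (\<beta> \<circ> r) j i = \<gamma> i) sequentially"
        by (rule tendsto_baire_coord[OF g(3)])
      have e2: "eventually (\<lambda>j. Suc i \<le> j) sequentially" by (rule eventually_ge_at_top)
      show ?thesis using e1 e2
      proof (rule eventually_elim2)
        fix j assume "(\<beta> \<circ> r) j i = \<gamma> i" "Suc i \<le> j"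
        moreover have "j \<le> r j" by (rule seq_suble[OF g(2)])
        ultimately have "i < r j" "\<beta> (r j) i = \<gamma> i" by auto
        moreover have "\<alpha> (r j) i \<le> b i" using a(1)[of "r j"] \<open>i < r j\<close> unfolding Ck_def by auto
        ultimately show "\<alpha> (r j) i = \<gamma> i" unfolding \<beta>_def by simp
      qed
    qed
    have conv: "(\<lambda>j. \<alpha> (r j)) \<longlonglongrightarrow> \<gamma>" by (rule tendsto_baire) (rule ev)
    have inC: "\<alpha> (r j) \<in> C" for j using a(1)[of "r j"] unfolding Ck_def by auto
    have gC: "\<gamma> \<in> C" by (rule closed_sequentially[OF Cf(1) inC conv])
    have l1: "(\<lambda>j. f (\<alpha> (r j))) \<longlonglongrightarrow> f \<gamma>"
      by (rule continuous_on_tendsto_compose[OF Cf(2) conv gC]) (simp add: inC)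
    have l2: "(\<lambda>j. f (\<alpha> (r j))) \<longlonglongrightarrow> y"
    proof (rule tendsto_dist_iff[THEN iffD2])
      show "(\<lambda>j. dist (f (\<alpha> (r j))) y) \<longlonglongrightarrow> 0"
      proof (rule Lim_null_comparison[OF _ LIMSEQ_inverse_real_of_nat])
        show "\<forall>\<^sub>F j in sequentially. norm (dist (f (\<alpha> (r j))) y) \<le> inverse (real (Suc j))"
        proof (rule always_eventually, rule allI)
          fix j
          have "inverse (real (Suc (r j))) \<le> inverse (real (Suc j))"
            using seq_suble[OF g(2), of j] by (simp add: le_imp_inverse_le)
          moreover have "norm (dist (f (\<alpha> (r j))) y) = dist (f (\<alpha> (r j))) y" by simp
          ultimately show "norm (dist (f (\<alpha> (r j))) y) \<le> inverse (real (Suc j))"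
            using a(2)[of "r j"] by linarith
        qed
      qed
    qed
    have "y = f \<gamma>" using LIMSEQ_unique[OF l2 l1] .
    then show "y \<in> K" unfolding K_def using gC g(1) by blast
  qed
  have Ks: "K \<in> sets \<mu>" by (rule closed_in_mu[OF compact_imp_closed[OF cK]])
  have "measure \<mu> (\<Inter>k. CL k) \<le> measure \<mu> K"
    by (rule F.finite_measure_mono[OF sub Ks])
  then show ?thesis using cK KP t_le by (intro exI[of _ K]) auto
qed

lemma analytic_sandwich:
  assumes "analytic P"
  shows "\<exists>L R. L \<in> sets \<mu> \<and> R \<in> sets \<mu> \<and> L \<subseteq> P \<and> P \<subseteq> R \<and> measure \<mu> (R - L) = 0"
proof -
  interpret F: finite_measure \<mu> by (rule fin)
  obtain H where H: "H \<in> sets \<mu>" "P \<subseteq> H" "measure \<mu> H = om \<mu> P" using om_hull by blast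
  have "\<exists>K. compact K \<and> K \<subseteq> P \<and> om \<mu> P - inverse (real (Suc n)) \<le> measure \<mu> K" for n
    by (rule analytic_inner[OF assms]) simp
  then have "\<forall>n. \<exists>K. compact K \<and> K \<subseteq> P \<and> om \<mu> P - inverse (real (Suc n)) \<le> measure \<mu> K" by blast
  from choice[OF this] obtain K where
    K: "\<And>n. compact (K n)" "\<And>n. K n \<subseteq> P" "\<And>n. om \<mu> P - inverse (real (Suc n)) \<le> measure \<mu> (K n)"
    by blast
  define L where "L = (\<Union>n. K n)"
  have Ks: "K n \<in> sets \<mu>" for n by (rule closed_in_mu[OF compact_imp_closed[OF K(1)]])
  have Ls: "L \<in> sets \<mu>" unfolding L_def by (rule sets.countable_UN) (simp add: Ks image_subset_iff)
  have LP: "L \<subseteq> P" unfolding L_def using K(2) by auto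
  have "om \<mu> P \<le> measure \<mu> L"
  proof (rule le_of_eps)
    fix n
    have "measure \<mu> (K n) \<le> measure \<mu> L" by (rule F.finite_measure_mono[OF _ Ls]) (auto simp: L_def)
    then show "om \<mu> P \<le> measure \<mu> L + inverse (real (Suc n))" using K(3)[of n] by simp
  qed
  moreover have "measure \<mu> (H - L) = measure \<mu> H - measure \<mu> L"
    by (rule F.finite_measure_Diff[OF H(1) Ls]) (use LP H(2) in auto)
  moreover have "measure \<mu> L \<le> measure \<mu> H" by (rule F.finite_measure_mono) (use LP H in auto)
  ultimately have "measure \<mu> (H - L) = 0" using H(3) by simp
  then show ?thesis using Ls H LP by blast
qed

end

primrec colF :: "'a set \<Rightarrow> ('a \<Rightarrow> nat) \<Rightarrow> ('a set \<Rightarrow> 'a set) \<Rightarrow> nat \<Rightarrow> nat \<Rightarrow> 'a set" where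
  "colF D st NB 0 = (\<lambda>l. {})"
| "colF D st NB (Suc t) = (\<lambda>l. colF D st NB t l \<union>
      {x \<in> D. st x = t \<and> x \<notin> NB (colF D st NB t l) \<and> (\<forall>l'<l. x \<in> NB (colF D st NB t l'))})"

lemma memF:
  "x \<in> colF D st NB t l \<longleftrightarrow>
    (st x < t \<and> x \<in> D \<and> x \<notin> NB (colF D st NB (st x) l) \<and> (\<forall>l'<l. x \<in> NB (colF D st NB (st x) l')))"
proof (induction t arbitrary: l)
  case 0 then show ?case by simp
next
  case (Suc t)
  show ?case
  proof (cases "st x < t")
    case True
    then show ?thesis using Suc[of l] by auto
  next
    case False
    then have "x \<notin> colF D st NB t l" using Suc[of l] by auto
    then show ?thesis using False by (auto simp: less_Suc_eq)
  qed
qed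

lemma colF_uniq:
  assumes "x \<in> colF D st NB t l" "x \<in> colF D st NB t' l'"
  shows "l = l'"
proof (rule ccontr)
  assume "l \<noteq> l'"
  then consider "l < l'" | "l' < l" by linarith
  then show False
  proof cases
    case 1 then show False using assms by (auto simp: memF)
  next
    case 2 then show False using assms by (auto simp: memF)
  qed
qed

lemma colF_borel:
  fixes D :: "'a::topological_space set"
  assumes NB: "\<And>S. S \<in> sets borel \<Longrightarrow> NB S \<in> sets borel"
    and stb: "\<And>t. {x\<in>D. st x = t} \<in> sets borel"
  shows "colF D st NB t l \<in> sets borel"
proof (induction t arbitrary: l)
  case 0 then show ?case by simp
next
  case (Suc t)
  have eq: "{x \<in> D. st x = t \<and> x \<notin> NB (colF D st NB t l) \<and> (\<forall>l'<l. x \<in> NB (colF D st NB t l'))}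
     = {x\<in>D. st x = t} \<inter> (UNIV - NB (colF D st NB t l)) \<inter> (UNIV - (\<Union>l'\<in>{..<l}. UNIV - NB (colF D st NB t l')))"
    by auto
  have "(\<Union>l'\<in>{..<l}. UNIV - NB (colF D st NB t l')) \<in> sets borel"
    using NB Suc by (intro sets.finite_UN) auto
  then have "{x \<in> D. st x = t \<and> x \<notin> NB (colF D st NB t l) \<and> (\<forall>l'<l. x \<in> NB (colF D st NB t l'))} \<in> sets borel"
    unfolding eq using stb NB Suc by (intro sets.Int sets.Diff) auto
  then show ?case using Suc by simp
qed

lemma greedy_coloring:
  fixes G :: "'a::topological_space \<Rightarrow> 'a \<Rightarrow> bool" and D :: "'a set" and st :: "'a \<Rightarrow> nat"
    and NB NZ :: "'a set \<Rightarrow> 'a set" and M :: nat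
  assumes NB: "\<And>S. S \<in> sets borel \<Longrightarrow> NB S \<in> sets borel"
    and NZ: "\<And>S x. S \<in> sets borel \<Longrightarrow> x \<notin> NZ S \<Longrightarrow> (x \<in> NB S \<longleftrightarrow> (\<exists>y\<in>S. G x y))"
    and stb: "\<And>t. {x\<in>D. st x = t} \<in> sets borel"
    and sym: "\<And>x y. G x y \<Longrightarrow> G y x"
    and diff: "\<And>x y. x \<in> D \<Longrightarrow> y \<in> D \<Longrightarrow> G x y \<Longrightarrow> st x \<noteq> st y"
    and fin: "\<And>x. finite {y. G x y}"
    and deg: "\<And>x. x \<in> D \<Longrightarrow> card {y\<in>D. G x y \<and> st y < st x} \<le> M"
  defines "Z \<equiv> (\<Union>t. \<Union>l. NZ (colF D st NB t l))"
  shows "\<exists>c::'a\<Rightarrow>nat. c \<in> measurable borel (count_space UNIV) \<and> (\<forall>x\<in>D - Z. c x \<le> M)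
            \<and> (\<forall>x\<in>D - Z. \<forall>y\<in>D - Z. G x y \<longrightarrow> c x \<noteq> c y)"
proof -
  let ?F = "colF D st NB"
  have Fb: "?F t l \<in> sets borel" for t l by (rule colF_borel[OF NB stb])
  define Col where "Col = (\<lambda>l. \<Union>t. ?F t l)"
  have Colb: "Col l \<in> sets borel" for l unfolding Col_def using Fb by (intro sets.countable_UN) auto
  define c where "c = (\<lambda>x. LEAST l. x \<in> Col l)"
  have cm: "c \<in> measurable borel (count_space UNIV)"
    unfolding c_def by (rule measurable_Least) (simp add: pred_def Colb)
  have NZ': "x \<notin> Z \<Longrightarrow> x \<in> NB (?F t l) \<longleftrightarrow> (\<exists>y\<in>?F t l. G x y)" for x t l
    using NZ[OF Fb] unfolding Z_def by blast
  have cval: "c x = l" if "x \<in> ?F t l" for x t l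
  proof -
    have "x \<in> Col l" using that unfolding Col_def by blast
    moreover have "l \<le> l'" if "x \<in> Col l'" for l'
      using that \<open>x \<in> ?F t l\<close> colF_uniq unfolding Col_def by fastforce
    ultimately show ?thesis unfolding c_def by (rule Least_equality)
  qed
  have exists: "\<exists>l\<le>M. x \<in> ?F (Suc (st x)) l" if x: "x \<in> D" "x \<notin> Z" for x
  proof -
    let ?s = "st x"
    have "\<exists>l\<le>M. x \<notin> NB (?F ?s l)"
    proof (rule ccontr)
      assume "\<not> (\<exists>l\<le>M. x \<notin> NB (?F ?s l))"
      then have "\<forall>l\<in>{..M}. \<exists>y. y \<in> ?F ?s l \<and> G x y" using NZ'[OF x(2)] by auto
      then obtain yy where yy: "\<And>l. l \<in> {..M} \<Longrightarrow> yy l \<in> ?F ?s l \<and> G x (yy l)"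
        by metis
      have inj: "inj_on yy {..M}"
        by (rule inj_onI) (use yy colF_uniq in metis)
      have sub: "yy ` {..M} \<subseteq> {y\<in>D. G x y \<and> st y < st x}"
        using yy by (auto simp: memF)
      have fin2: "finite {y\<in>D. G x y \<and> st y < st x}"
        by (rule finite_subset[OF _ fin[of x]]) auto
      have "card (yy ` {..M}) \<le> card {y\<in>D. G x y \<and> st y < st x}"
        by (rule card_mono[OF fin2 sub])
      moreover have "card (yy ` {..M}) = Suc M" using card_image[OF inj] by simp
      ultimately show False using deg[OF x(1)] by simp
    qed
    then have ex: "\<exists>l. x \<notin> NB (?F ?s l)" by blast
    define l0 where "l0 = (LEAST l. x \<notin> NB (?F ?s l))"
    have l0a: "x \<notin> NB (?F ?s l0)" unfolding l0_def by (rule LeastI_ex[OF ex])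
    have l0b: "\<forall>l'<l0. x \<in> NB (?F ?s l')" unfolding l0_def using not_less_Least by blast
    have "l0 \<le> M" using \<open>\<exists>l\<le>M. x \<notin> NB (?F ?s l)\<close> unfolding l0_def by (meson Least_le le_trans)
    moreover have "x \<in> ?F (Suc ?s) l0" using l0a l0b x(1) by (simp add: memF)
    ultimately show ?thesis by blast
  qed
  have bound: "\<forall>x\<in>D - Z. c x \<le> M"
  proof
    fix x assume "x \<in> D - Z"
    then obtain l where "l \<le> M" "x \<in> ?F (Suc (st x)) l" using exists by blast
    then show "c x \<le> M" using cval by metis
  qed
  have proper: "c x \<noteq> c y" if xy: "x \<in> D - Z" "y \<in> D - Z" "G x y" for x y
  proof
    assume eq: "c x = c y"
    obtain lx where lx: "x \<in> ?F (Suc (st x)) lx" using exists xy(1) by blast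
    obtain ly where ly: "y \<in> ?F (Suc (st y)) ly" using exists xy(2) by blast
    have "lx = ly" using eq cval[OF lx] cval[OF ly] by simp
    have key: False if a: "a \<in> D - Z" "b \<in> D - Z" "G a b" "st b < st a"
        "a \<in> ?F (Suc (st a)) l" "b \<in> ?F (Suc (st b)) l" for a b l
    proof -
      have "b \<in> ?F (st a) l" using a(4,6) by (simp add: memF)
      moreover have "a \<notin> NB (?F (st a) l)" using a(5) by (simp add: memF)
      ultimately show False using NZ'[of a "st a" l] a(1,3) by blast
    qed
    have "st x \<noteq> st y" using diff xy by blast
    then consider "st y < st x" | "st x < st y" by linarith
    then show False
    proof cases
      case 1 then show False using key[of x y lx] xy lx ly \<open>lx = ly\<close> by blast
    next
      case 2 then show False using key[of y x lx] xy lx ly \<open>lx = ly\<close> sym by blast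
    qed
  qed
  show ?thesis using cm bound proper by blast
qed

lemma nb_approx:
  fixes \<mu> :: "'a::polish_space measure" and G :: "'a \<Rightarrow> 'a \<Rightarrow> bool"
  assumes sm: "sets \<mu> = sets borel" and pr: "prob_space \<mu>"
    and E: "{p. G (fst p) (snd p)} \<in> sets (borel :: ('a \<times> 'a) measure)"
    and S: "S \<in> sets borel"
  shows "\<exists>L N. L \<in> sets borel \<and> N \<in> null_sets \<mu> \<and> (\<forall>x. x \<notin> N \<longrightarrow> (x \<in> L \<longleftrightarrow> (\<exists>y\<in>S. G x y)))"
proof -
  have fin: "finite_measure \<mu>" using pr by (simp add: prob_space_def)
  have "UNIV \<times> S \<in> sets (borel \<Otimes>\<^sub>M borel :: ('a \<times> 'a) measure)"
    using S by (intro pair_measureI) auto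
  then have US: "UNIV \<times> S \<in> sets (borel :: ('a \<times> 'a) measure)" by (simp only: borel_prod)
  have "analytic ({p. G (fst p) (snd p)} \<inter> (UNIV \<times> S))"
    by (rule analytic_borel) (use E US in auto)
  then have "analytic (fst ` ({p. G (fst p) (snd p)} \<inter> (UNIV \<times> S)))"
    by (intro analytic_image continuous_on_fst continuous_on_id)
  moreover have "fst ` ({p. G (fst p) (snd p)} \<inter> (UNIV \<times> S)) = {x. \<exists>y\<in>S. G x y}"
    by force
  ultimately have an: "analytic {x. \<exists>y\<in>S. G x y}" by simp
  obtain L R where LR: "L \<in> sets \<mu>" "R \<in> sets \<mu>" "L \<subseteq> {x. \<exists>y\<in>S. G x y}"
      "{x. \<exists>y\<in>S. G x y} \<subseteq> R" "measure \<mu> (R - L) = 0"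
    using analytic_sandwich[OF sm fin an] by blast
  have "R - L \<in> null_sets \<mu>"
  proof -
    interpret F: finite_measure \<mu> by (rule fin)
    have "R - L \<in> sets \<mu>" using LR by auto
    moreover have "emeasure \<mu> (R - L) = 0"
      using LR(5) F.emeasure_eq_measure[of "R - L"] by simp
    ultimately show ?thesis by (simp add: null_sets_def)
  qed
  moreover have "\<forall>x. x \<notin> R - L \<longrightarrow> (x \<in> L \<longleftrightarrow> (\<exists>y\<in>S. G x y))" using LR(3,4) by blast
  ultimately show ?thesis using LR(1) sm by (intro exI[of _ L] exI[of _ "R - L"]) auto
qed


theorem lemma5p2:
  fixes \<mu> :: "'a::polish_space measure"
    and G :: "'a \<Rightarrow> 'a \<Rightarrow> bool"
    and M :: nat and r :: real
    and A :: "nat \<Rightarrow> 'a set"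
  assumes "standard_prob_space \<mu>"
    and "borel_graph \<mu> G"
    and "locally_finite_graph G"
    and "M > 0"
    and "0 < r" and "r < 1"
    and "\<And>n. A n \<in> sets \<mu>"
    and "disjoint_family A"
    and "\<And>n. measure \<mu> (space \<mu> - (\<Union>k\<le>n. A k))
               \<le> r * measure \<mu> (space \<mu> - (\<Union>k<n. A k))"
    and "\<And>n x. x \<in> A n \<Longrightarrow> induced_degree G (space \<mu> - (\<Union>k<n. A k)) x \<le> M"
  shows "chi_ap \<mu> G \<le> enat (M + 1)"
proof -
  have sm: "sets \<mu> = sets borel" and pr: "prob_space \<mu>"
    using assms(1) unfolding standard_prob_space_def by auto
  interpret P: prob_space \<mu> by (rule pr)
  have sp: "space \<mu> = UNIV" using sets_eq_imp_space_eq[OF sm] by simp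
  have symG: "\<And>x y. G x y \<Longrightarrow> G y x" and irr: "\<And>x. \<not> G x x"
    and E: "{p. G (fst p) (snd p)} \<in> sets (borel :: ('a \<times> 'a) measure)"
    using assms(2) unfolding borel_graph_def by auto
  have finG: "\<And>x. finite {y. G x y}" using assms(3) unfolding locally_finite_graph_def by auto
  have "\<forall>S. \<exists>LN::'a set \<times> 'a set. S \<in> sets borel \<longrightarrow> (fst LN \<in> sets borel \<and> snd LN \<in> null_sets \<mu>
      \<and> (\<forall>x. x \<notin> snd LN \<longrightarrow> (x \<in> fst LN \<longleftrightarrow> (\<exists>y\<in>S. G x y))))"
  proof
    fix S :: "'a set"
    show "\<exists>LN::'a set \<times> 'a set. S \<in> sets borel \<longrightarrow> (fst LN \<in> sets borel \<and> snd LN \<in> null_sets \<mu>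
      \<and> (\<forall>x. x \<notin> snd LN \<longrightarrow> (x \<in> fst LN \<longleftrightarrow> (\<exists>y\<in>S. G x y))))"
    proof (cases "S \<in> sets borel")
      case True
      then obtain L N where "L \<in> sets borel" "N \<in> null_sets \<mu>"
          "\<forall>x. x \<notin> N \<longrightarrow> (x \<in> L \<longleftrightarrow> (\<exists>y\<in>S. G x y))"
        using nb_approx[OF sm pr E True] by blast
      then show ?thesis by (intro exI[of _ "(L, N)"]) simp
    next
      case False then show ?thesis by simp
    qed
  qed
  from choice[OF this] obtain NN :: "'a set \<Rightarrow> 'a set \<times> 'a set" where
    NN: "\<And>S. S \<in> sets borel \<Longrightarrow> fst (NN S) \<in> sets borel \<and> snd (NN S) \<in> null_sets \<mu>
      \<and> (\<forall>x. x \<notin> snd (NN S) \<longrightarrow> (x \<in> fst (NN S) \<longleftrightarrow> (\<exists>y\<in>S. G x y)))"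
    by blast
  define NB where "NB = (\<lambda>S. fst (NN S))"
  define NZ where "NZ = (\<lambda>S. snd (NN S))"
  have NBb: "\<And>S. S \<in> sets borel \<Longrightarrow> NB S \<in> sets borel" using NN unfolding NB_def by blast
  have NZn: "\<And>S. S \<in> sets borel \<Longrightarrow> NZ S \<in> null_sets \<mu>" using NN unfolding NZ_def by blast
  have NZp: "\<And>S x. S \<in> sets borel \<Longrightarrow> x \<notin> NZ S \<Longrightarrow> (x \<in> NB S \<longleftrightarrow> (\<exists>y\<in>S. G x y))"
    using NN unfolding NZ_def NB_def by blast
  obtain BS :: "'a set set" where BS: "countable BS" "topological_basis BS"
    using ex_countable_basis by blast
  have BSne: "BS \<noteq> {}"
  proof
    assume "BS = {}"
    obtain x :: 'a where "x \<in> UNIV" by simp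
    from topological_basisE[OF BS(2) open_UNIV this] show False using \<open>BS = {}\<close> by blast
  qed
  define U where "U = from_nat_into BS"
  have Uo: "open (U i)" for i
    using topological_basis_open[OF BS(2) from_nat_into[OF BSne]] unfolding U_def .
  have Ub: "U i \<in> sets borel" for i using Uo by simp
  define W where "W = (\<lambda>i. U i - NB (U i))"
  have Wb: "W i \<in> sets borel" for i unfolding W_def using Ub NBb by auto
  define Z0 where "Z0 = (\<Union>i. NZ (U i))"
  have Z0n: "Z0 \<in> null_sets \<mu>" unfolding Z0_def using NZn Ub by (intro null_sets_UN) auto
  have Wex: "\<exists>i. x \<in> W i" if x: "x \<notin> Z0" for x
  proof -
    have "open (- {y. G x y})" using finG[of x] by (simp add: finite_imp_closed open_Compl)
    moreover have "x \<in> - {y. G x y}" using irr by simp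
    ultimately obtain b where b: "b \<in> BS" "x \<in> b" "b \<subseteq> - {y. G x y}"
      by (rule topological_basisE[OF BS(2)])
    have "b \<in> range U" using b(1) range_from_nat_into[OF BSne BS(1)] unfolding U_def by simp
    then obtain i where i: "U i = b" by auto
    then have "\<not> (\<exists>y\<in>U i. G x y)" using b(3) by auto
    moreover have "x \<notin> NZ (U i)" using x unfolding Z0_def by auto
    ultimately have "x \<notin> NB (U i)" using NZp[OF Ub] by blast
    then show ?thesis using b(2) i unfolding W_def by auto
  qed
  have Wprop: "\<not> G x y" if "x \<notin> Z0" "x \<in> W i" "y \<in> W i" for x y i
  proof -
    have "x \<notin> NB (U i)" "x \<notin> NZ (U i)" using that unfolding W_def Z0_def by auto
    then have "\<not> (\<exists>y\<in>U i. G x y)" using NZp[OF Ub] by blast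
    then show ?thesis using that(3) unfolding W_def by auto
  qed
  have As: "A n \<in> sets borel" for n using assms(7) sm by auto
  define BB where "BB = (\<lambda>n. \<Union>k\<le>n. A k)"
  have BBb: "BB n \<in> sets borel" for n unfolding BB_def using As by (intro sets.finite_UN) auto
  have decay: "measure \<mu> (UNIV - BB n) \<le> r ^ Suc n" for n
  proof (induction n)
    case 0
    have "measure \<mu> (space \<mu> - (\<Union>k\<le>0. A k)) \<le> r * measure \<mu> (space \<mu> - (\<Union>k<0. A k))"
      by (rule assms(9))
    moreover have "measure \<mu> (space \<mu>) = 1" by (rule P.prob_space)
    ultimately show ?case by (simp add: BB_def sp)
  next
    case (Suc n)
    have "measure \<mu> (space \<mu> - (\<Union>k\<le>Suc n. A k)) \<le> r * measure \<mu> (space \<mu> - (\<Union>k<Suc n. A k))"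
      by (rule assms(9))
    moreover have "(\<Union>k<Suc n. A k) = BB n" unfolding BB_def by (simp add: lessThan_Suc_atMost)
    ultimately have "measure \<mu> (UNIV - BB (Suc n)) \<le> r * measure \<mu> (UNIV - BB n)"
      by (simp add: BB_def sp)
    also have "\<dots> \<le> r * r ^ Suc n" using Suc assms(5) by (intro mult_left_mono) auto
    finally show ?case by simp
  qed
  have "approx_colorable \<mu> G (M + 1)"
    unfolding approx_colorable_def
  proof (intro allI impI)
    fix \<epsilon> :: real assume \<epsilon>: "\<epsilon> > 0"
    obtain N where N: "r ^ N < \<epsilon>/2" using real_arch_pow_inv[of "\<epsilon>/2" r] \<epsilon> assms(6) by auto
    have rN: "r ^ Suc N \<le> r ^ N" using assms(5,6) by (intro power_decreasing) auto
    have mBB: "measure \<mu> (BB N) > 1 - \<epsilon>/2"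
    proof -
      have "measure \<mu> (space \<mu> - BB N) = 1 - measure \<mu> (BB N)"
        using P.prob_compl[of "BB N"] BBb sm by simp
      then show ?thesis using decay[of N] rN N sp by simp
    qed
    define DI where "DI = (\<lambda>I. BB N \<inter> (\<Union>i<I. W i) - Z0)"
    have Z0s: "Z0 \<in> sets \<mu>" using Z0n by auto
    have DIs: "DI I \<in> sets \<mu>" for I
    proof -
      have "BB N \<inter> (\<Union>i<I. W i) \<in> sets borel" using BBb Wb by (intro sets.Int sets.finite_UN) auto
      then show ?thesis unfolding DI_def using Z0s sm by auto
    qed
    have incDI: "incseq DI"
    proof (rule incseq_SucI)
      fix I show "DI I \<subseteq> DI (Suc I)" unfolding DI_def by (auto simp: less_Suc_eq)
    qed
    have unDI: "(\<Union>I. DI I) = BB N - Z0"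
    proof
      show "(\<Union>I. DI I) \<subseteq> BB N - Z0" unfolding DI_def by auto
      show "BB N - Z0 \<subseteq> (\<Union>I. DI I)"
      proof
        fix x assume x: "x \<in> BB N - Z0"
        then obtain i where "x \<in> W i" using Wex by blast
        then have "x \<in> DI (Suc i)" using x unfolding DI_def by auto
        then show "x \<in> (\<Union>I. DI I)" by blast
      qed
    qed
    have "measure \<mu> (BB N - Z0) = measure \<mu> (BB N)"
      by (rule measure_Diff_null_set) (use BBb sm Z0n in auto)
    then have mun: "measure \<mu> (\<Union>I. DI I) > 1 - \<epsilon>" using unDI mBB \<epsilon> by simp
    have lim: "(\<lambda>I. measure \<mu> (DI I)) \<longlonglongrightarrow> measure \<mu> (\<Union>I. DI I)"
      by (rule Lim_measure_incseq) (use DIs incDI P.emeasure_finite in auto)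
    have "eventually (\<lambda>I. 1 - \<epsilon> < measure \<mu> (DI I)) sequentially"
      by (rule order_tendstoD(1)[OF lim mun])
    then obtain I where mDI: "1 - \<epsilon> < measure \<mu> (DI I)" by (auto simp: eventually_sequentially)
    define D where "D = DI I"
    have Ds: "D \<in> sets borel" using DIs sm unfolding D_def by auto
    define kk where "kk = (\<lambda>x. LEAST k. x \<in> A k)"
    define c0 where "c0 = (\<lambda>x. LEAST i. x \<in> W i)"
    define st where "st = (\<lambda>x. (N - kk x) * I + c0 x)"
    have Dprop: "kk x \<le> N \<and> x \<in> A (kk x) \<and> c0 x < I \<and> x \<in> W (c0 x) \<and> x \<notin> Z0" if x: "x \<in> D" for x
    proof -
      obtain k where k: "k \<le> N" "x \<in> A k" using x unfolding D_def DI_def BB_def by auto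
      obtain i where i: "i < I" "x \<in> W i" using x unfolding D_def DI_def by auto
      have "kk x \<le> k" unfolding kk_def using k(2) by (rule Least_le)
      moreover have "x \<in> A (kk x)" unfolding kk_def using k(2) by (rule LeastI)
      moreover have "c0 x \<le> i" unfolding c0_def using i(2) by (rule Least_le)
      moreover have "x \<in> W (c0 x)" unfolding c0_def using i(2) by (rule LeastI)
      moreover have "x \<notin> Z0" using x unfolding D_def DI_def by auto
      ultimately show ?thesis using k(1) i(1) by auto
    qed
    have kkm: "kk \<in> measurable borel (count_space UNIV)"
      unfolding kk_def by (rule measurable_Least) (simp add: pred_def As)
    have c0m: "c0 \<in> measurable borel (count_space UNIV)"
      unfolding c0_def by (rule measurable_Least) (simp add: pred_def Wb)
    have stm: "st \<in> measurable borel (count_space UNIV)"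
    proof -
      have "(\<lambda>x. (N - a) * I + c0 x) \<in> measurable borel (count_space UNIV)" for a
        by (rule measurable_compose_countable[OF _ c0m]) simp
      then show ?thesis unfolding st_def by (rule measurable_compose_countable[OF _ kkm])
    qed
    have stb: "{x\<in>D. st x = t} \<in> sets borel" for t
    proof -
      have "st -` {t} \<inter> space borel \<in> sets borel" by (rule measurable_sets[OF stm]) simp
      then have "D \<inter> (st -` {t} \<inter> space borel) \<in> sets borel" using Ds by auto
      moreover have "{x\<in>D. st x = t} = D \<inter> (st -` {t} \<inter> space borel)" by auto
      ultimately show ?thesis by simp
    qed
    have diff: "st x \<noteq> st y" if xy: "x \<in> D" "y \<in> D" "G x y" for x y
    proof
      assume eq: "st x = st y"
      have "st x mod I = c0 x" using Dprop[OF xy(1)] unfolding st_def by simp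
      moreover have "st y mod I = c0 y" using Dprop[OF xy(2)] unfolding st_def by simp
      ultimately have "c0 x = c0 y" using eq by simp
      then show False using Wprop[of x "c0 x" y] Dprop[OF xy(1)] Dprop[OF xy(2)] xy(3) by auto
    qed
    have deg: "card {y\<in>D. G x y \<and> st y < st x} \<le> M" if x: "x \<in> D" for x
    proof -
      have sub: "{y\<in>D. G x y \<and> st y < st x} \<subseteq> {y \<in> space \<mu> - (\<Union>k<kk x. A k). G x y}"
      proof
        fix y assume "y \<in> {y\<in>D. G x y \<and> st y < st x}"
        then have yD: "y \<in> D" "G x y" "st y < st x" by auto
        have "kk x \<le> kk y"
        proof (rule ccontr)
          assume "\<not> kk x \<le> kk y"
          then have lt: "kk y < kk x" by simp
          have "Suc (N - kk x) \<le> N - kk y" using lt Dprop[OF x] by linarith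
          then have h1: "Suc (N - kk x) * I \<le> (N - kk y) * I" by (rule mult_le_mono1)
          have h2: "Suc (N - kk x) * I = (N - kk x) * I + I" by simp
          have "st x < st y" using h1 h2 Dprop[OF x] unfolding st_def by linarith
          then show False using yD(3) by simp
        qed
        have "y \<notin> A k" if "k < kk x" for k
        proof
          assume "y \<in> A k"
          moreover have "y \<in> A (kk y)" using Dprop[OF yD(1)] by simp
          moreover have "k \<noteq> kk y" using that \<open>kk x \<le> kk y\<close> by simp
          ultimately show False using assms(8) unfolding disjoint_family_on_def by blast
        qed
        then show "y \<in> {y \<in> space \<mu> - (\<Union>k<kk x. A k). G x y}" using yD(2) sp by auto
      qed
      have "finite {y \<in> space \<mu> - (\<Union>k<kk x. A k). G x y}"
        by (rule finite_subset[OF _ finG[of x]]) auto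
      then have "card {y\<in>D. G x y \<and> st y < st x} \<le> card {y \<in> space \<mu> - (\<Union>k<kk x. A k). G x y}"
        by (rule card_mono[OF _ sub])
      also have "\<dots> \<le> M" using assms(10)[of x "kk x"] Dprop[OF x] unfolding induced_degree_def by simp
      finally show ?thesis .
    qed
    define Z where "Z = (\<Union>t. \<Union>l. NZ (colF D st NB t l))"
    obtain c :: "'a \<Rightarrow> nat" where
      c: "c \<in> measurable borel (count_space UNIV)" "\<forall>x\<in>D - Z. c x \<le> M"
         "\<forall>x\<in>D - Z. \<forall>y\<in>D - Z. G x y \<longrightarrow> c x \<noteq> c y"
      using greedy_coloring[of NB NZ G D st M, OF NBb NZp stb symG diff finG deg] unfolding Z_def by blast
    have Zn: "Z \<in> null_sets \<mu>"
      unfolding Z_def using NZn[OF colF_borel[OF NBb stb]] by (intro null_sets_UN) auto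
    define Af where "Af = D - Z"
    have Afs: "Af \<in> sets \<mu>" unfolding Af_def using Ds sm Zn by auto
    have "measure \<mu> Af = measure \<mu> D" unfolding Af_def
      by (rule measure_Diff_null_set) (use Ds sm Zn in auto)
    then have mAf: "measure \<mu> Af > 1 - \<epsilon>" using mDI unfolding D_def by simp
    have "c \<in> measurable \<mu> (count_space UNIV)"
      by (subst measurable_cong_sets[OF sm refl]) (rule c(1))
    then have "c \<in> measurable (completion \<mu>) (count_space UNIV)" by (rule measurable_completion)
    then have "measurable_proper_coloring_on \<mu> G Af (M + 1)"
      unfolding measurable_proper_coloring_on_def using c(2,3) unfolding Af_def
      by (intro exI[of _ c]) (auto simp: less_Suc_eq_le)
    then show "\<exists>A\<in>sets \<mu>. 1 - \<epsilon> < measure \<mu> A \<and> measurable_proper_coloring_on \<mu> G A (M + 1)"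
      using Afs mAf by blast
  qed
  then show ?thesis unfolding chi_ap_def by (intro Inf_lower) blast
qed

end
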